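(* For any $t\in \mathbb{T}_n$, denote the value of the $(1,n)$ entry of its matrix format $\hat{t}$ as $\hat{t}_{1,n}$, and let $J_n$ be the $(n\times n)$ exchange matrix (entries $1$ on the antidiagonal, $0$ elsewhere). Then $\frac{1}{\hat{t}_{1,n}}\hat{t}\, J_n$ is a normalized uncurling metric of $\mathbb{T}_n$ if $\hat{t}_{1,n}\ne 0$, and all normalized uncurling metrics of $\mathbb{T}_n$ can be written in this form for some $t\in \mathbb{T}_n$.
   Context: $\mathbb{T}_n$ is the $n$-dimensional real unital algebra (usual matrix product) of real upper triangular Toeplitz $(n\times n)$-matrices, with elements $s=(x_1,\dots,x_n)$ giving the constant values on the successive diagonals starting from the main diagonal; its identity is $\mathbf{1}=(1,0,\dots,0)$, so $\|\mathbf{1}\|^2=\mathbf{1}\cdot\mathbf{1}=1$. An uncurling metric is a real symmetric $(n\times n)$-matrix $L$ satisfying $d\big((s^{-1})^T L\,\mathbf{d}s\big)=0$ on an open ball of units centered at $\mathbf{1}$ (with $\mathbf{d}s=(dx_1,\dots,dx_n)^T$ and $d$ the exterior derivative). A normalized uncurling metric is an uncurling metric $L$ that additionally satisfies $s^T L s^{-1}=\|\mathbf{1}\|^2$ on a sufficiently small neighborhood of $\mathbf{1}$. It is known that every uncurling metric of $\mathbb{T}_n$ has the form $\hat t J_n$ for some $t\in\mathbb{T}_n$. *)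

theory Defs
  imports Complex_Main
begin

(* Elements of T_n are represented as vectors s :: nat => real, where s k (k < n)
   is the value on the k-th superdiagonal (0-indexed; s 0 is the main diagonal).
   Components with index >= n are irrelevant. Matrices are nat => nat => real,
   0-indexed, only entries with indices < n are meaningful. *)

definition tmul :: "nat \<Rightarrow> (nat \<Rightarrow> real) \<Rightarrow> (nat \<Rightarrow> real) \<Rightarrow> (nat \<Rightarrow> real)" where
  "tmul n a b = (\<lambda>k. if k < n then (\<Sum>i=0..k. a i * b (k - i)) else 0)"

definition tone :: "nat \<Rightarrow> nat \<Rightarrow> real" where
  "tone n = (\<lambda>k. if k = 0 \<and> k < n then 1 else 0)"

definition tinv :: "nat \<Rightarrow> (nat \<Rightarrow> real) \<Rightarrow> (nat \<Rightarrow> real)" where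
  "tinv n s = (THE b. (\<forall>k\<ge>n. b k = 0) \<and> tmul n s b = tone n)"

definition tmat :: "nat \<Rightarrow> (nat \<Rightarrow> real) \<Rightarrow> nat \<Rightarrow> nat \<Rightarrow> real" where
  "tmat n t = (\<lambda>i j. if i \<le> j then t (j - i) else 0)"

definition exch :: "nat \<Rightarrow> nat \<Rightarrow> nat \<Rightarrow> real" where
  "exch n = (\<lambda>i j. if i + j = n - 1 then 1 else 0)"

definition mmul :: "nat \<Rightarrow> (nat \<Rightarrow> nat \<Rightarrow> real) \<Rightarrow> (nat \<Rightarrow> nat \<Rightarrow> real) \<Rightarrow> nat \<Rightarrow> nat \<Rightarrow> real" where
  "mmul n A B = (\<lambda>i j. \<Sum>k<n. A i k * B k j)"

definition symmetric_mat :: "nat \<Rightarrow> (nat \<Rightarrow> nat \<Rightarrow> real) \<Rightarrow> bool" where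
  "symmetric_mat n L \<longleftrightarrow> (\<forall>i<n. \<forall>j<n. L i j = L j i)"

definition tball :: "nat \<Rightarrow> (nat \<Rightarrow> real) \<Rightarrow> real \<Rightarrow> (nat \<Rightarrow> real) set" where
  "tball n c r = {s. sqrt (\<Sum>i<n. (s i - c i)^2) < r}"

text \<open>Coefficient of dx_j in the 1-form (s^{-1})^T L ds.\<close>
definition form_coeff :: "nat \<Rightarrow> (nat \<Rightarrow> nat \<Rightarrow> real) \<Rightarrow> nat \<Rightarrow> (nat \<Rightarrow> real) \<Rightarrow> real" where
  "form_coeff n L j s = (\<Sum>i<n. tinv n s i * L i j)"

definition has_partial :: "((nat \<Rightarrow> real) \<Rightarrow> real) \<Rightarrow> nat \<Rightarrow> (nat \<Rightarrow> real) \<Rightarrow> real \<Rightarrow> bool" where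
  "has_partial F k s D \<longleftrightarrow> ((\<lambda>h. F (s(k := s k + h))) has_real_derivative D) (at 0)"

text \<open>d((s^{-1})^T L ds) = 0 at s: the coefficients have symmetric partial derivatives.\<close>
definition closed_at :: "nat \<Rightarrow> (nat \<Rightarrow> nat \<Rightarrow> real) \<Rightarrow> (nat \<Rightarrow> real) \<Rightarrow> bool" where
  "closed_at n L s \<longleftrightarrow> (\<forall>j<n. \<forall>k<n. \<exists>D.
      has_partial (form_coeff n L j) k s D \<and> has_partial (form_coeff n L k) j s D)"

definition uncurling :: "nat \<Rightarrow> (nat \<Rightarrow> nat \<Rightarrow> real) \<Rightarrow> bool" where
  "uncurling n L \<longleftrightarrow> symmetric_mat n L \<and>
     (\<exists>r>0. (\<forall>s\<in>tball n (tone n) r. s 0 \<noteq> 0) \<and> (\<forall>s\<in>tball n (tone n) r. closed_at n L s))"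

definition normalized_uncurling :: "nat \<Rightarrow> (nat \<Rightarrow> nat \<Rightarrow> real) \<Rightarrow> bool" where
  "normalized_uncurling n L \<longleftrightarrow> uncurling n L \<and>
     (\<exists>r>0. \<forall>s\<in>tball n (tone n) r. s 0 \<noteq> 0 \<and>
        (\<Sum>i<n. \<Sum>j<n. s i * L i j * tinv n s j) = (\<Sum>i<n. tone n i * tone n i))"

end

theory Submission imports Defs "HOL-Computational_Algebra.Formal_Power_Series" begin

notation fps_nth (infixl "\<diamondsuit>" 75)


definition FF :: "nat \<Rightarrow> (nat \<Rightarrow> real) \<Rightarrow> real fps" where
  "FF n s = Abs_fps (\<lambda>k. if k < n then s k else 0)"

lemma FF_nth: "FF n s \<diamondsuit> k = (if k < n then s k else 0)"
  by (simp add: FF_def)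

lemma tinv_eq:
  assumes n: "1 \<le> n" and s0: "s 0 \<noteq> 0"
  shows "tinv n s = (\<lambda>k. if k < n then inverse (FF n s) \<diamondsuit> k else 0)"
proof -
  define c where "c = (\<lambda>k. if k < n then inverse (FF n s) \<diamondsuit> k else 0)"
  have F0: "FF n s \<diamondsuit> 0 \<noteq> 0" using n s0 by (simp add: FF_nth)
  have P: "(\<forall>k\<ge>n. c k = 0) \<and> tmul n s c = tone n"
  proof
    show "\<forall>k\<ge>n. c k = 0" by (simp add: c_def)
    show "tmul n s c = tone n"
    proof
      fix k
      show "tmul n s c k = tone n k"
      proof (cases "k < n")
        case True
        have "tmul n s c k = (\<Sum>i=0..k. FF n s \<diamondsuit> i * inverse (FF n s) \<diamondsuit> (k - i))"
          using True by (auto simp: tmul_def c_def FF_nth intro!: sum.cong)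
        also have "\<dots> = (FF n s * inverse (FF n s)) \<diamondsuit> k" by (simp add: fps_mult_nth)
        also have "\<dots> = (1::real fps) \<diamondsuit> k" using inverse_mult_eq_1'[OF F0] by simp
        finally show ?thesis using True by (simp add: tone_def)
      qed (simp add: tmul_def tone_def)
    qed
  qed
  have U: "b = c" if hb: "(\<forall>k\<ge>n. b k = 0) \<and> tmul n s b = tone n" for b
  proof
    fix k
    define B where "B = Abs_fps b"
    have FB: "(FF n s * B) \<diamondsuit> m = (1::real fps) \<diamondsuit> m" if "m < n" for m
    proof -
      have "(FF n s * B) \<diamondsuit> m = tmul n s b m"
        using that by (auto simp: tmul_def FF_nth B_def fps_mult_nth intro!: sum.cong)
      also have "\<dots> = (1::real fps) \<diamondsuit> m" using hb that by (simp add: tone_def)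
      finally show ?thesis .
    qed
    show "b k = c k"
    proof (cases "k < n")
      case True
      have "b k = ((inverse (FF n s) * FF n s) * B) \<diamondsuit> k"
        using inverse_mult_eq_1[OF F0] by (simp add: B_def)
      also have "\<dots> = (inverse (FF n s) * (FF n s * B)) \<diamondsuit> k" by (simp add: mult.assoc)
      also have "\<dots> = (\<Sum>i=0..k. inverse (FF n s) \<diamondsuit> i * (FF n s * B) \<diamondsuit> (k - i))" by (simp add: fps_mult_nth)
      also have "\<dots> = (\<Sum>i=0..k. inverse (FF n s) \<diamondsuit> i * (1::real fps) \<diamondsuit> (k - i))"
        using True by (intro sum.cong) (auto simp: FB)
      also have "\<dots> = (inverse (FF n s) * 1) \<diamondsuit> k" by (simp only: fps_mult_nth)
      finally show ?thesis using True by (simp add: c_def)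
    qed (use hb in \<open>simp add: c_def\<close>)
  qed
  show ?thesis unfolding tinv_def c_def[symmetric]
    using P U by (rule the_equality)
qed

lemma inverse_coeff_cont:
  fixes P :: "real \<Rightarrow> real fps"
  assumes c: "\<And>i. isCont (\<lambda>h. P h \<diamondsuit> i) 0" and p0: "P 0 \<diamondsuit> 0 \<noteq> 0"
  shows "isCont (\<lambda>h. inverse (P h) \<diamondsuit> m) 0"
proof (induction m rule: less_induct)
  case (less m)
  have i0: "isCont (\<lambda>h. inverse (P h \<diamondsuit> 0)) 0"
    using c[of 0] p0 by (intro continuous_intros) auto
  show ?case
  proof (cases m)
    case 0
    then show ?thesis using i0 by (simp add: fps_inverse_def)
  next
    case (Suc m')
    have e: "inverse (P h) \<diamondsuit> m = - inverse (P h \<diamondsuit> 0) * (\<Sum>i=1..m. P h \<diamondsuit> i * inverse (P h) \<diamondsuit> (m - i))" for h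
      using Suc by (simp add: fps_inverse_def)
    have "isCont (\<lambda>h. - inverse (P h \<diamondsuit> 0) * (\<Sum>i=1..m. P h \<diamondsuit> i * inverse (P h) \<diamondsuit> (m - i))) 0"
      using i0 c less Suc p0 by (intro continuous_intros) auto
    then show ?thesis unfolding e .
  qed
qed

lemma FF_upd:
  assumes "k < n"
  shows "FF n (s(k := s k + h)) = FF n s + fps_const h * fps_X ^ k"
  using assms by (intro fps_ext) (auto simp: FF_nth fps_mult_left_const_nth)

lemma inv_deriv:
  assumes s0: "s 0 \<noteq> 0" and n: "1 \<le> n" and k: "k < n"
  shows "((\<lambda>h. inverse (FF n (s(k := s k + h))) \<diamondsuit> i) has_real_derivative
           (- ((inverse (FF n s) ^ 2 * fps_X ^ k) \<diamondsuit> i))) (at 0)"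
proof -
  define P where "P h = FF n s + fps_const h * fps_X ^ k" for h
  define G where "G h = inverse (P h)" for h
  have Pn: "P h \<diamondsuit> a = FF n s \<diamondsuit> a + (if a = k then h else 0)" for h a
    by (simp add: P_def fps_mult_left_const_nth)
  have Pc: "isCont (\<lambda>h. P h \<diamondsuit> a) 0" for a
    unfolding Pn by (cases "a = k") (auto intro!: continuous_intros)
  have P0: "P 0 \<diamondsuit> 0 \<noteq> 0" using s0 n by (simp add: Pn FF_nth)
  have Gc: "isCont (\<lambda>h. G h \<diamondsuit> a) 0" for a
    unfolding G_def by (rule inverse_coeff_cont[OF Pc P0])
  have ev: "eventually (\<lambda>h. P h \<diamondsuit> 0 \<noteq> 0) (at 0)"
    using tendsto_imp_eventually_ne[OF isContD[OF Pc[of 0]] P0] .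
  have key: "(G h \<diamondsuit> i - G 0 \<diamondsuit> i) / h = - ((G h * (fps_X ^ k * G 0)) \<diamondsuit> i)"
    if h0: "h \<noteq> 0" and ph: "P h \<diamondsuit> 0 \<noteq> 0" for h
  proof -
    have e1: "G h * P h = 1" using ph unfolding G_def by (rule inverse_mult_eq_1)
    have e2: "P 0 * G 0 = 1" using P0 unfolding G_def by (rule inverse_mult_eq_1')
    have "G h * (P 0 - P h) * G 0 = G h * (P 0 * G 0) - (G h * P h) * G 0"
      by (simp only: right_diff_distrib left_diff_distrib mult.assoc)
    then have "G h - G 0 = G h * (P 0 - P h) * G 0" by (simp add: e1 e2)
    also have "P 0 - P h = - (fps_const h * fps_X ^ k)" by (simp add: P_def)
    also have "G h * (- (fps_const h * fps_X ^ k)) * G 0 = - (fps_const h * (G h * (fps_X ^ k * G 0)))"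
      by (simp add: mult_ac)
    finally have "G h - G 0 = - (fps_const h * (G h * (fps_X ^ k * G 0)))" .
    then have "(G h - G 0) \<diamondsuit> i = (- (fps_const h * (G h * (fps_X ^ k * G 0)))) \<diamondsuit> i"
      by (rule arg_cong)
    then have "G h \<diamondsuit> i - G 0 \<diamondsuit> i = - h * (G h * (fps_X ^ k * G 0)) \<diamondsuit> i"
      by (simp only: fps_sub_nth fps_neg_nth fps_mult_left_const_nth mult_minus_left)
    then show ?thesis using h0 by simp
  qed
  have lim0: "isCont (\<lambda>h. - (\<Sum>a=0..i. G h \<diamondsuit> a * (fps_X ^ k * G 0) \<diamondsuit> (i - a))) 0"
    using Gc by (intro continuous_intros)
  have lim: "((\<lambda>h. - ((G h * (fps_X ^ k * G 0)) \<diamondsuit> i)) \<longlongrightarrow> - ((G 0 * (fps_X ^ k * G 0)) \<diamondsuit> i)) (at 0)"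
    using isContD[OF lim0] by (simp add: fps_mult_nth)
  have "((\<lambda>h. (G h \<diamondsuit> i - G 0 \<diamondsuit> i) / h) \<longlongrightarrow> - ((G 0 * (fps_X ^ k * G 0)) \<diamondsuit> i)) (at 0)"
    by (rule Lim_transform_eventually[OF lim])
       (use ev in \<open>auto simp: eventually_at_filter key elim!: eventually_mono\<close>)
  then have D: "((\<lambda>h. G h \<diamondsuit> i) has_real_derivative (- ((G 0 * (fps_X ^ k * G 0)) \<diamondsuit> i))) (at 0)"
    by (simp add: has_field_derivative_iff)
  have G0: "G 0 = inverse (FF n s)" by (simp add: G_def P_def)
  have eq1: "G 0 * (fps_X ^ k * G 0) = inverse (FF n s) ^ 2 * fps_X ^ k"
    unfolding G0 power2_eq_square by (simp only: mult_ac)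
  have Gh: "(\<lambda>h. G h \<diamondsuit> i) = (\<lambda>h. inverse (FF n (s(k := s k + h))) \<diamondsuit> i)"
    by (simp add: G_def P_def FF_upd[OF k])
  show ?thesis using D unfolding eq1 Gh .
qed

lemma shiftsum:
  fixes w g :: "nat \<Rightarrow> real"
  assumes kn: "k \<le> n" and g: "\<forall>m\<ge>n. g m = 0"
  shows "(\<Sum>i<n. (if i < k then 0 else w (i - k)) * g i) = (\<Sum>m<n. w m * g (m + k))"
proof -
  have "(\<Sum>i<n. (if i < k then 0 else w (i - k)) * g i)
      = (\<Sum>i=0..<k. (if i < k then 0 else w (i - k)) * g i) + (\<Sum>i=k..<n. (if i < k then 0 else w (i - k)) * g i)"
    using kn by (simp add: lessThan_atLeast0 sum.atLeastLessThan_concat[of 0 k n, symmetric] del: sum.op_ivl_Suc)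
  also have "\<dots> = (\<Sum>i=k..<n. w (i - k) * g i)" by simp
  also have "\<dots> = (\<Sum>i=0+k..<(n-k)+k. w (i - k) * g i)" using kn by simp
  also have "\<dots> = (\<Sum>m=0..<n-k. w m * g (m + k))" by (subst sum.shift_bounds_nat_ivl) simp
  also have "\<dots> = (\<Sum>m=0..<n-k. w m * g (m + k)) + (\<Sum>m=n-k..<n. w m * g (m + k))"
    using g kn by (auto intro!: sum.neutral)
  also have "\<dots> = (\<Sum>m<n. w m * g (m + k))"
    by (simp add: lessThan_atLeast0 sum.atLeastLessThan_concat)
  finally show ?thesis .
qed

lemma fc_partial:
  assumes s0: "s 0 \<noteq> 0" and n: "1 \<le> n" and k: "k < n"
  shows "has_partial (form_coeff n L j) k s
           (- (\<Sum>i<n. ((inverse (FF n s)) ^ 2 * fps_X ^ k) \<diamondsuit> i * L i j))"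
proof -
  have ev: "eventually (\<lambda>h. (s(k := s k + h)) 0 \<noteq> 0) (nhds 0)"
    unfolding eventually_nhds_metric
    by (rule exI[of _ "\<bar>s 0\<bar>"]) (use s0 in \<open>auto simp: dist_real_def\<close>)
  have ev2: "eventually (\<lambda>h. form_coeff n L j (s(k := s k + h)) =
        (\<Sum>i<n. inverse (FF n (s(k := s k + h))) \<diamondsuit> i * L i j)) (nhds 0)"
    using ev by eventually_elim (simp add: form_coeff_def tinv_eq[OF n])
  have D: "((\<lambda>h. (\<Sum>i<n. inverse (FF n (s(k := s k + h))) \<diamondsuit> i * L i j)) has_real_derivative
        (\<Sum>i<n. (- (((inverse (FF n s)) ^ 2 * fps_X ^ k) \<diamondsuit> i)) * L i j)) (at 0)"
    by (intro DERIV_sum DERIV_cmult_right inv_deriv[of s n k, OF s0 n k])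
  show ?thesis unfolding has_partial_def
    by (subst DERIV_cong_ev[OF refl ev2 refl]) (use D in \<open>simp add: sum_negf\<close>)
qed

lemma tball_s0:
  assumes "s \<in> tball n (tone n) r" "1 \<le> n"
  shows "\<bar>s 0 - 1\<bar> < r"
proof -
  have t0: "tone n 0 = 1" using assms by (simp add: tone_def)
  have "(s 0 - tone n 0)^2 \<le> (\<Sum>i<n. (s i - tone n i)^2)"
    by (rule member_le_sum) (use assms in auto)
  then have "sqrt ((s 0 - 1)^2) \<le> sqrt (\<Sum>i<n. (s i - tone n i)^2)"
    unfolding t0 by (rule real_sqrt_le_mono)
  then show ?thesis using assms by (simp add: tball_def)
qed

lemma tball_ne0:
  assumes "s \<in> tball n (tone n) r" "1 \<le> n" "r \<le> 1"
  shows "s 0 \<noteq> 0"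
  using tball_s0[OF assms(1,2)] assms(3) by auto

lemma tball_pt:
  assumes "\<bar>e\<bar> < r" "p < n"
  shows "(tone n)(p := tone n p + e) \<in> tball n (tone n) r"
proof -
  have "(\<Sum>i<n. (((tone n)(p := tone n p + e)) i - tone n i)^2) = (\<Sum>i<n. if i = p then e^2 else 0)"
    by (intro sum.cong) auto
  also have "\<dots> = e^2" using assms by simp
  finally show ?thesis using assms by (simp add: tball_def)
qed

lemma tone_in: "0 < r \<Longrightarrow> tone n \<in> tball n (tone n) r"
  by (simp add: tball_def)

lemma FF_tone: "1 \<le> n \<Longrightarrow> FF n (tone n) = 1"
  by (intro fps_ext) (simp add: FF_nth tone_def)

lemma tinv_tone:
  assumes "1 \<le> n" shows "tinv n (tone n) = tone n"
proof -
  have "tone n 0 \<noteq> 0" using assms by (simp add: tone_def)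
  then show ?thesis unfolding tinv_eq[of n "tone n", OF assms \<open>tone n 0 \<noteq> 0\<close>] FF_tone[OF assms]
    using assms by (auto simp: tone_def)
qed

lemma mmul_exch:
  assumes "i < n" "j < n"
  shows "mmul n (tmat n t) (exch n) i j = (if i + j < n then t (n - 1 - (i + j)) else 0)"
proof -
  have "mmul n (tmat n t) (exch n) i j = (\<Sum>m<n. if m = n - 1 - j then (if i \<le> m then t (m - i) else 0) else 0)"
    unfolding mmul_def tmat_def exch_def using assms by (intro sum.cong) auto
  also have "\<dots> = (if i \<le> n - 1 - j then t (n - 1 - j - i) else 0)"
    using assms by (simp add: sum.delta)
  also have "\<dots> = (if i + j < n then t (n - 1 - (i + j)) else 0)"
    using assms by (auto simp: diff_diff_eq add.commute)
  finally show ?thesis .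
qed

lemma part1:
  assumes n: "1 \<le> n" and c: "tmat n t 0 (n - 1) \<noteq> 0"
  shows "normalized_uncurling n (\<lambda>i j. (1 / tmat n t 0 (n - 1)) * mmul n (tmat n t) (exch n) i j)"
proof -
  define L where "L = (\<lambda>i j. (1 / tmat n t 0 (n - 1)) * mmul n (tmat n t) (exch n) i j)"
  define cc where "cc = t (n - 1)"
  have cc: "cc \<noteq> 0" using c by (simp add: cc_def tmat_def)
  have tm: "tmat n t 0 (n - 1) = cc" by (simp add: tmat_def cc_def)
  define g where "g m = (if m < n then t (n - 1 - m) / cc else 0)" for m
  have Lg: "L i j = g (i + j)" if "i < n" "j < n" for i j
    using that unfolding L_def tm by (simp add: mmul_exch g_def)
  have gz: "\<forall>m\<ge>n. g m = 0" by (simp add: g_def)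
  have g0: "g 0 = 1" using n cc by (simp add: g_def cc_def)
  have sym: "symmetric_mat n L"
    unfolding symmetric_mat_def by (auto simp: Lg add.commute)
  have hank: "(\<Sum>i<n. (W * fps_X ^ k) \<diamondsuit> i * L i j) = (\<Sum>m<n. W \<diamondsuit> m * g (m + k + j))"
    if "k < n" "j < n" for W :: "real fps" and k j
  proof -
    have "(\<Sum>i<n. (W * fps_X ^ k) \<diamondsuit> i * L i j) = (\<Sum>i<n. (if i < k then 0 else W \<diamondsuit> (i - k)) * g (i + j))"
      using that by (intro sum.cong) (auto simp: Lg fps_X_power_mult_right_nth)
    also have "\<dots> = (\<Sum>m<n. W \<diamondsuit> m * g (m + k + j))"
      using shiftsum[of k n "\<lambda>i. g (i + j)" "\<lambda>m. W \<diamondsuit> m"] that gz by simp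
    finally show ?thesis .
  qed
  have closed: "closed_at n L s" if s: "s \<in> tball n (tone n) 1" for s
  proof -
    have s0: "s 0 \<noteq> 0" using tball_ne0[OF s n] by simp
    show ?thesis unfolding closed_at_def
    proof (intro allI impI)
      fix j k assume j: "j < n" and k: "k < n"
      let ?W = "(inverse (FF n s)) ^ 2"
      have e: "(\<Sum>i<n. (?W * fps_X ^ k) \<diamondsuit> i * L i j) = (\<Sum>i<n. (?W * fps_X ^ j) \<diamondsuit> i * L i k)"
        unfolding hank[OF k j] hank[OF j k] by (simp add: add_ac)
      show "\<exists>D. has_partial (form_coeff n L j) k s D \<and> has_partial (form_coeff n L k) j s D"
        using fc_partial[of s n k L j, OF s0 n k] fc_partial[of s n j L k, OF s0 n j] e by auto
    qed
  qed
  have norm: "(\<Sum>i<n. \<Sum>j<n. s i * L i j * tinv n s j) = (\<Sum>i<n. tone n i * tone n i)"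
    if s: "s \<in> tball n (tone n) 1" for s
  proof -
    have s0: "s 0 \<noteq> 0" using tball_ne0[OF s n] by simp
    define U where "U = inverse (FF n s)"
    have inner: "(\<Sum>j<n. s i * L i j * tinv n s j) = s i * (\<Sum>m<n. (if m < i then 0 else U \<diamondsuit> (m - i)) * g m)"
      if i: "i < n" for i
    proof -
      have "(\<Sum>j<n. s i * L i j * tinv n s j) = s i * (\<Sum>j<n. U \<diamondsuit> j * g (j + i))"
        using i by (simp add: sum_distrib_left tinv_eq[of n s, OF n s0] Lg U_def add.commute mult_ac)
      also have "(\<Sum>j<n. U \<diamondsuit> j * g (j + i)) = (\<Sum>m<n. (if m < i then 0 else U \<diamondsuit> (m - i)) * g m)"
        using shiftsum[of i n g "\<lambda>m. U \<diamondsuit> m"] i gz by simp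
      finally show ?thesis .
    qed
    have "(\<Sum>i<n. \<Sum>j<n. s i * L i j * tinv n s j)
        = (\<Sum>i<n. \<Sum>m<n. s i * ((if m < i then 0 else U \<diamondsuit> (m - i)) * g m))"
      by (simp add: inner sum_distrib_left)
    also have "\<dots> = (\<Sum>m<n. g m * (\<Sum>i<n. s i * (if m < i then 0 else U \<diamondsuit> (m - i))))"
      by (subst sum.swap) (simp add: sum_distrib_left mult_ac)
    also have "\<dots> = (\<Sum>m<n. g m * (1::real fps) \<diamondsuit> m)"
    proof (intro sum.cong refl)
      fix m assume m: "m \<in> {..<n}"
      have "(\<Sum>i<n. s i * (if m < i then 0 else U \<diamondsuit> (m - i))) = (\<Sum>i=0..m. FF n s \<diamondsuit> i * U \<diamondsuit> (m - i))"
      proof -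
        have "(\<Sum>i<n. s i * (if m < i then 0 else U \<diamondsuit> (m - i))) = (\<Sum>i\<in>{0..m}. s i * (if m < i then 0 else U \<diamondsuit> (m - i)))"
          using m by (intro sum.mono_neutral_right) auto
        also have "\<dots> = (\<Sum>i=0..m. FF n s \<diamondsuit> i * U \<diamondsuit> (m - i))"
          using m by (intro sum.cong) (auto simp: FF_nth)
        finally show ?thesis .
      qed
      also have "\<dots> = (FF n s * U) \<diamondsuit> m" by (simp add: fps_mult_nth)
      also have "FF n s * U = 1" unfolding U_def
        by (rule inverse_mult_eq_1') (use s0 n in \<open>simp add: FF_nth\<close>)
      finally show "g m * (\<Sum>i<n. s i * (if m < i then 0 else U \<diamondsuit> (m - i))) = g m * (1::real fps) \<diamondsuit> m"
        by simp
    qed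
    also have "\<dots> = g 0" using n by (simp add: if_distrib sum.delta cong: if_cong)
    also have "\<dots> = (\<Sum>i<n. if i = 0 then 1 else 0)"
      using n g0 by simp
    also have "\<dots> = (\<Sum>i<n. tone n i * tone n i)"
      by (intro sum.cong) (auto simp: tone_def)
    finally show ?thesis .
  qed
  have "uncurling n L"
    unfolding uncurling_def using sym closed tball_ne0[OF _ n] by (intro conjI exI[of _ 1]) auto
  moreover have "\<exists>r>0. \<forall>s\<in>tball n (tone n) r. s 0 \<noteq> 0 \<and>
        (\<Sum>i<n. \<Sum>j<n. s i * L i j * tinv n s j) = (\<Sum>i<n. tone n i * tone n i)"
    using norm tball_ne0[OF _ n] by (intro exI[of _ 1]) auto
  ultimately show ?thesis unfolding normalized_uncurling_def L_def by blast
qed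

lemma W_deriv:
  assumes n: "1 \<le> n" and p: "p < n"
  shows "((\<lambda>e. ((inverse (FF n ((tone n)(p := tone n p + e)))) ^ 2) \<diamondsuit> m) has_real_derivative
           (if m = p then -2 else 0)) (at 0)"
proof -
  define G where "G e = inverse (FF n ((tone n)(p := tone n p + e)))" for e
  have t0: "tone n 0 \<noteq> 0" using n by (simp add: tone_def)
  have dG: "((\<lambda>e. G e \<diamondsuit> a) has_real_derivative (- (if a = p then 1 else 0))) (at 0)" for a
    using inv_deriv[of "tone n" n p a, OF t0 n p] unfolding G_def FF_tone[OF n] by simp
  have G0: "G 0 \<diamondsuit> a = (if a = 0 then 1 else 0)" for a
    unfolding G_def by (simp add: FF_tone[OF n])
  have eq: "(\<lambda>e. ((inverse (FF n ((tone n)(p := tone n p + e)))) ^ 2) \<diamondsuit> m)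
      = (\<lambda>e. \<Sum>a=0..m. G e \<diamondsuit> a * G e \<diamondsuit> (m - a))"
    by (simp add: G_def power2_eq_square fps_mult_nth)
  have D: "((\<lambda>e. \<Sum>a=0..m. G e \<diamondsuit> a * G e \<diamondsuit> (m - a)) has_real_derivative
      (\<Sum>a=0..m. (- (if a = p then 1 else 0)) * G 0 \<diamondsuit> (m - a) + (- (if m - a = p then 1 else 0)) * G 0 \<diamondsuit> a)) (at 0)"
    by (intro DERIV_sum DERIV_mult dG)
  have v: "(\<Sum>a=0..m. (- (if a = p then 1 else 0)) * G 0 \<diamondsuit> (m - a) + (- (if m - a = p then 1 else 0)) * G 0 \<diamondsuit> a)
      = (if m = p then -2 else (0::real))"
  proof -
    have "(\<Sum>a=0..m. (- (if a = p then 1 else 0)) * G 0 \<diamondsuit> (m - a) + (- (if m - a = p then 1 else 0)) * G 0 \<diamondsuit> a)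
        = (\<Sum>a=0..m. (if a = p then (if m = p then -1 else 0) else 0) + (if a = 0 then (if m = p then -1 else 0) else 0))"
      by (intro sum.cong) (auto simp: G0)
    also have "\<dots> = (if m = p then -2 else 0)"
      by (simp add: sum.distrib)
    finally show ?thesis .
  qed
  show ?thesis using D unfolding eq v .
qed

lemma part2:
  assumes n: "1 \<le> n" and NL: "normalized_uncurling n L"
  shows "\<exists>t. tmat n t 0 (n - 1) \<noteq> 0 \<and>
               (\<forall>i<n. \<forall>j<n. L i j = (1 / tmat n t 0 (n - 1)) * mmul n (tmat n t) (exch n) i j)"
proof -
  from NL obtain r1 where r1: "r1 > 0" and b1: "\<forall>s\<in>tball n (tone n) r1. s 0 \<noteq> 0"
      and c1: "\<forall>s\<in>tball n (tone n) r1. closed_at n L s"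
    unfolding normalized_uncurling_def uncurling_def by blast
  from NL obtain r2 where r2: "r2 > 0" and b2: "\<forall>s\<in>tball n (tone n) r2. s 0 \<noteq> 0 \<and>
        (\<Sum>i<n. \<Sum>j<n. s i * L i j * tinv n s j) = (\<Sum>i<n. tone n i * tone n i)"
    unfolding normalized_uncurling_def by blast
  have L00: "L 0 0 = 1"
  proof -
    have h: "(\<Sum>i<n. \<Sum>j<n. tone n i * L i j * tone n j) = (\<Sum>i<n. tone n i * tone n i)"
      using conjunct2[OF bspec[OF b2 tone_in[OF r2, of n]]] unfolding tinv_tone[OF n] .
    have "(\<Sum>i<n. \<Sum>j<n. tone n i * L i j * tone n j) = (\<Sum>i<n. \<Sum>j<n. if i = 0 then (if j = 0 then L 0 0 else 0) else 0)"
      by (intro sum.cong refl) (auto simp: tone_def)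
    also have "\<dots> = (\<Sum>i<n. if i = 0 then L 0 0 else 0)"
      by (intro sum.cong refl) (use n in auto)
    also have "\<dots> = L 0 0" using n by simp
    finally have a: "(\<Sum>i<n. \<Sum>j<n. tone n i * L i j * tone n j) = L 0 0" .
    have "(\<Sum>i<n. tone n i * tone n i) = (\<Sum>i<n. if i = 0 then 1 else 0)"
      by (intro sum.cong) (auto simp: tone_def)
    also have "\<dots> = 1" using n by simp
    finally show ?thesis using h a by simp
  qed
  define A where "A j k m = (if m + k < n then L (m + k) j else 0) - (if m + j < n then L (m + j) k else 0)" for j k m
  have conv: "(\<Sum>i<n. (W * fps_X ^ k) \<diamondsuit> i * L i j) = (\<Sum>m<n. W \<diamondsuit> m * (if m + k < n then L (m + k) j else 0))"
    if k: "k < n" for W :: "real fps" and k j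
  proof -
    define g' where "g' i = (if i < n then L i j else 0)" for i
    have "(\<Sum>i<n. (W * fps_X ^ k) \<diamondsuit> i * L i j) = (\<Sum>i<n. (if i < k then 0 else W \<diamondsuit> (i - k)) * g' i)"
      by (intro sum.cong) (auto simp: g'_def fps_X_power_mult_right_nth)
    also have "\<dots> = (\<Sum>m<n. W \<diamondsuit> m * g' (m + k))"
      using shiftsum[of k n g' "\<lambda>m. W \<diamondsuit> m"] k by (simp add: g'_def)
    finally show ?thesis by (simp add: g'_def)
  qed
  have clos: "(\<Sum>m<n. ((inverse (FF n s)) ^ 2) \<diamondsuit> m * A j k m) = 0"
    if s: "s \<in> tball n (tone n) r1" and j: "j < n" and k: "k < n" for s j k
  proof -
    have s0: "s 0 \<noteq> 0" using b1 s by auto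
    let ?W = "(inverse (FF n s)) ^ 2"
    obtain D where D1: "has_partial (form_coeff n L j) k s D" and D2: "has_partial (form_coeff n L k) j s D"
      using c1 s j k unfolding closed_at_def by blast
    have e: "(\<Sum>i<n. (?W * fps_X ^ k) \<diamondsuit> i * L i j) = (\<Sum>i<n. (?W * fps_X ^ j) \<diamondsuit> i * L i k)"
      using DERIV_unique[OF D1[unfolded has_partial_def] fc_partial[of s n k L j, OF s0 n k, unfolded has_partial_def]]
            DERIV_unique[OF D2[unfolded has_partial_def] fc_partial[of s n j L k, OF s0 n j, unfolded has_partial_def]]
      by simp
    show ?thesis
      using e unfolding conv[OF k] conv[OF j] A_def
      by (simp add: right_diff_distrib sum_subtractf)
  qed
  have Azero: "A j k p = 0" if p: "p < n" and j: "j < n" and k: "k < n" for p j k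
  proof -
    define phi where "phi e = (\<Sum>m<n. ((inverse (FF n ((tone n)(p := tone n p + e)))) ^ 2) \<diamondsuit> m * A j k m)" for e
    have ev: "eventually (\<lambda>e. phi e = 0) (nhds 0)"
      unfolding eventually_nhds_metric
      by (rule exI[of _ r1]) (use r1 p j k in \<open>auto simp: dist_real_def phi_def intro!: clos tball_pt\<close>)
    have D0: "(phi has_real_derivative 0) (at 0)"
      by (subst DERIV_cong_ev[OF refl ev refl]) simp
    have D1: "(phi has_real_derivative (\<Sum>m<n. (if m = p then -2 else 0) * A j k m)) (at 0)"
      unfolding phi_def by (intro DERIV_sum DERIV_cmult_right W_deriv[OF n p])
    have "(\<Sum>m<n. (if m = p then -2 else 0) * A j k m) = (\<Sum>m<n. if m = p then -2 * A j k p else 0)"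
      by (intro sum.cong) auto
    also have "\<dots> = -2 * A j k p" using p by simp
    finally have "(\<Sum>m<n. (if m = p then -2 else 0) * A j k m) = -2 * A j k p" .
    then show ?thesis using DERIV_unique[OF D0 D1] by simp
  qed
  define t where "t q = L (n - 1 - q) 0" for q
  have tm: "tmat n t 0 (n - 1) = 1" using L00 by (simp add: tmat_def t_def)
  have "L i j = (1 / tmat n t 0 (n - 1)) * mmul n (tmat n t) (exch n) i j" if i: "i < n" and j: "j < n" for i j
  proof -
    have "A j 0 i = 0" using Azero[OF i j] n by simp
    then have "L i j = (if i + j < n then L (i + j) 0 else 0)" using i by (simp add: A_def)
    then show ?thesis unfolding tm using i j by (simp add: mmul_exch t_def)
  qed
  then show ?thesis using tm by (intro exI[of _ t]) auto
qed

theorem corollary10p5: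
  fixes n :: nat
  assumes "1 \<le> n"
  shows "(\<forall>t. tmat n t 0 (n - 1) \<noteq> 0 \<longrightarrow>
            normalized_uncurling n (\<lambda>i j. (1 / tmat n t 0 (n - 1)) * mmul n (tmat n t) (exch n) i j))
       \<and> (\<forall>L. normalized_uncurling n L \<longrightarrow>
            (\<exists>t. tmat n t 0 (n - 1) \<noteq> 0 \<and>
               (\<forall>i<n. \<forall>j<n. L i j = (1 / tmat n t 0 (n - 1)) * mmul n (tmat n t) (exch n) i j)))"
  using part1[OF assms] part2[OF assms] by blast

end
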